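(* For any connected locally finite cell complex $X$ with universal cover $\tilde X$, one has $\widetilde{\mathsf{TC}}(X)\ge\mathsf{TC}(\tilde X)$.
   Context: Normalized convention: $\mathsf{TC}$ of a contractible space is $0$; $\mathsf{TC}(Y)$ is the least $n$ such that $Y\times Y$ has an open cover by $n+1$ sets each admitting a continuous section of $Y^I\to Y\times Y$, $\alpha\mapsto(\alpha(0),\alpha(1))$. Let $P\colon\tilde X\to X$ be the universal cover with $\pi=\pi_1(X)$ acting by deck transformations, and $\tilde X\times_\pi\tilde X$ the quotient of $\tilde X\times\tilde X$ by the diagonal $\pi$-action. Let $p\colon X^I\to\tilde X\times_\pi\tilde X$, $p(\gamma)=[\tilde\gamma(0),\tilde\gamma(1)]$ for any lift $\tilde\gamma$ of $\gamma$, and $q\colon\tilde X\times_\pi\tilde X\to X\times X$, $q([x,y])=(Px,Py)$. $\widetilde{\mathsf{TC}}(X)$ is the least $k\ge0$ such that $X\times X$ has an open cover $U_0,\dots,U_k$ such that $p$ admits a continuous section over $q^{-1}(U_i)$ for each $i$. *)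

theory Defs
  imports "HOL-Analysis.Analysis" "HOL-Library.Extended_Nat"
begin

definition ndisc :: "nat \<Rightarrow> (nat \<Rightarrow> real) topology" where
  "ndisc n = subtopology (Euclidean_space n) {x. (\<Sum>i<n. x i ^ 2) \<le> 1}"

definition ndisc_interior :: "nat \<Rightarrow> (nat \<Rightarrow> real) set" where
  "ndisc_interior n = {x \<in> topspace (Euclidean_space n). (\<Sum>i<n. x i ^ 2) < 1}"

definition ndisc_boundary :: "nat \<Rightarrow> (nat \<Rightarrow> real) set" where
  "ndisc_boundary n = {x \<in> topspace (Euclidean_space n). (\<Sum>i<n. x i ^ 2) = 1}"

text \<open>A CW (cell) structure on X: a partition E of X into open cells, with dimension
  function cdim and characteristic maps Phi, satisfying closure finiteness and the
  weak topology condition.\<close>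
definition cw_structure ::
  "'a topology \<Rightarrow> 'a set set \<Rightarrow> ('a set \<Rightarrow> nat) \<Rightarrow> ('a set \<Rightarrow> (nat \<Rightarrow> real) \<Rightarrow> 'a) \<Rightarrow> bool" where
  "cw_structure X E cdim Phi \<longleftrightarrow>
     Hausdorff_space X \<and>
     pairwise disjnt E \<and> {} \<notin> E \<and> \<Union>E = topspace X \<and>
     (\<forall>e\<in>E. continuous_map (ndisc (cdim e)) X (Phi e) \<and>
        homeomorphic_map (subtopology (ndisc (cdim e)) (ndisc_interior (cdim e)))
                         (subtopology X e) (Phi e) \<and>
        (\<exists>F. finite F \<and> F \<subseteq> E \<and> (\<forall>e'\<in>F. cdim e' < cdim e) \<and>
             Phi e ` ndisc_boundary (cdim e) \<subseteq> \<Union>F)) \<and>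
     (\<forall>C \<subseteq> topspace X.
        (\<forall>e\<in>E. closedin (subtopology X (Phi e ` topspace (ndisc (cdim e))))
                          (C \<inter> Phi e ` topspace (ndisc (cdim e))))
        \<longrightarrow> closedin X C)"

definition locally_finite_cw_complex :: "'a topology \<Rightarrow> bool" where
  "locally_finite_cw_complex X \<longleftrightarrow>
     (\<exists>E cdim Phi. cw_structure X E cdim Phi \<and>
        (\<forall>x\<in>topspace X. \<exists>N. openin X N \<and> x \<in> N \<and> finite {e\<in>E. e \<inter> N \<noteq> {}}))"

definition covering_map :: "'b topology \<Rightarrow> 'a topology \<Rightarrow> ('b \<Rightarrow> 'a) \<Rightarrow> bool" where
  "covering_map Xt X P \<longleftrightarrow>
     continuous_map Xt X P \<and> P ` topspace Xt = topspace X \<and>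
     (\<forall>x\<in>topspace X. \<exists>T. x \<in> T \<and> openin X T \<and>
        (\<exists>V. \<Union>V = {y \<in> topspace Xt. P y \<in> T} \<and> (\<forall>u\<in>V. openin Xt u) \<and>
             pairwise disjnt V \<and>
             (\<forall>u\<in>V. homeomorphic_map (subtopology Xt u) (subtopology X T) P)))"

definition simply_connected_space :: "'a topology \<Rightarrow> bool" where
  "simply_connected_space Y \<longleftrightarrow>
     path_connected_space Y \<and>
     (\<forall>g. pathin Y g \<and> g 1 = g 0 \<longrightarrow>
        (\<exists>H. continuous_map (prod_topology (top_of_set {0..1::real}) (top_of_set {0..1::real})) Y H \<and>
             (\<forall>t\<in>{0..1}. H (0, t) = g t \<and> H (1, t) = g 0) \<and>
             (\<forall>s\<in>{0..1}. H (s, 0) = g 0 \<and> H (s, 1) = g 0)))"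

definition universal_cover :: "'b topology \<Rightarrow> 'a topology \<Rightarrow> ('b \<Rightarrow> 'a) \<Rightarrow> bool" where
  "universal_cover Xt X P \<longleftrightarrow> covering_map Xt X P \<and> simply_connected_space Xt"

text \<open>Deck transformations (for the universal cover this group is pi_1(X)).\<close>
definition deck :: "'b topology \<Rightarrow> ('b \<Rightarrow> 'a) \<Rightarrow> ('b \<Rightarrow> 'b) set" where
  "deck Xt P = {g. homeomorphic_map Xt Xt g \<and> (\<forall>x\<in>topspace Xt. P (g x) = P x)}"

definition quotient_topology :: "'a topology \<Rightarrow> ('a \<Rightarrow> 'c) \<Rightarrow> 'c topology" where
  "quotient_topology T f =
     topology (\<lambda>U. U \<subseteq> f ` topspace T \<and> openin T {x \<in> topspace T. f x \<in> U})"

definition dorbit :: "'b topology \<Rightarrow> ('b \<Rightarrow> 'a) \<Rightarrow> 'b \<times> 'b \<Rightarrow> ('b \<times> 'b) set" where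
  "dorbit Xt P z = {(g (fst z), g (snd z)) | g. g \<in> deck Xt P}"

definition orbit_space :: "'b topology \<Rightarrow> ('b \<Rightarrow> 'a) \<Rightarrow> ('b \<times> 'b) set topology" where
  "orbit_space Xt P = quotient_topology (prod_topology Xt Xt) (dorbit Xt P)"

definition qmap :: "('b \<Rightarrow> 'a) \<Rightarrow> ('b \<times> 'b) set \<Rightarrow> 'a \<times> 'a" where
  "qmap P z = (P (fst (SOME w. w \<in> z)), P (snd (SOME w. w \<in> z)))"

text \<open>A continuous section of the path fibration over U is encoded, via the exponential
  law for the compact-open topology on Y^I, as a continuous map U \<times> [0,1] \<rightarrow> Y.\<close>
definition TC :: "'a topology \<Rightarrow> enat" where
  "TC Y = Inf {enat n | n. \<exists>U :: nat \<Rightarrow> ('a \<times> 'a) set.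
     (\<forall>i\<le>n. openin (prod_topology Y Y) (U i)) \<and>
     (\<Union>i\<le>n. U i) = topspace (prod_topology Y Y) \<and>
     (\<forall>i\<le>n. \<exists>H. continuous_map
                   (prod_topology (subtopology (prod_topology Y Y) (U i)) (top_of_set {0..1::real})) Y H \<and>
                 (\<forall>a b. (a, b) \<in> U i \<longrightarrow> H ((a, b), 0) = a \<and> H ((a, b), 1) = b))}"

text \<open>Section s of p over q^{-1}(U), encoded as H(z,t) = s(z)(t); the condition p(s z) = z
  says some (equivalently every) lift of the path H(z,-) has endpoint pair in the class z.\<close>
definition TCtilde :: "'b topology \<Rightarrow> 'a topology \<Rightarrow> ('b \<Rightarrow> 'a) \<Rightarrow> enat" where
  "TCtilde Xt X P = Inf {enat k | k. \<exists>U :: nat \<Rightarrow> ('a \<times> 'a) set.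
     (\<forall>i\<le>k. openin (prod_topology X X) (U i)) \<and>
     (\<Union>i\<le>k. U i) = topspace (prod_topology X X) \<and>
     (\<forall>i\<le>k. \<exists>H. continuous_map
                   (prod_topology
                      (subtopology (orbit_space Xt P)
                         {z \<in> dorbit Xt P ` (topspace Xt \<times> topspace Xt). qmap P z \<in> U i})
                      (top_of_set {0..1::real})) X H \<and>
                 (\<forall>z \<in> dorbit Xt P ` (topspace Xt \<times> topspace Xt). qmap P z \<in> U i \<longrightarrow>
                    (\<exists>\<gamma>. pathin Xt \<gamma> \<and> (\<forall>t\<in>{0..1}. P (\<gamma> t) = H (z, t)) \<and>
                         (\<gamma> 0, \<gamma> 1) \<in> z)))}"

end

theory Submission
  imports Defs
begin


lemma continuous_map_local:
  assumes "f \<in> topspace X \<rightarrow> topspace Y"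
    and "\<And>x. x \<in> topspace X \<Longrightarrow> \<exists>N. openin X N \<and> x \<in> N \<and> continuous_map (subtopology X N) Y f"
  shows "continuous_map X Y f"
  unfolding continuous_map_def
proof (intro conjI allI impI)
  show "f \<in> topspace X \<rightarrow> topspace Y" by fact
  fix U assume U: "openin Y U"
  show "openin X {x \<in> topspace X. f x \<in> U}"
  proof (subst openin_subopen, intro ballI)
    fix x assume x: "x \<in> {x \<in> topspace X. f x \<in> U}"
    then obtain N where N: "openin X N" "x \<in> N" "continuous_map (subtopology X N) Y f"
      using assms(2) by blast
    have "openin (subtopology X N) {y \<in> topspace (subtopology X N). f y \<in> U}"
      using N(3) U openin_continuous_map_preimage by blast
    then have o: "openin X {y \<in> topspace (subtopology X N). f y \<in> U}"
      using N(1) openin_trans_full by blast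
    show "\<exists>T. openin X T \<and> x \<in> T \<and> T \<subseteq> {x \<in> topspace X. f x \<in> U}"
      by (rule exI[of _ "{y \<in> topspace (subtopology X N). f y \<in> U}"]) (use o x N in \<open>auto simp: topspace_subtopology\<close>)
  qed
qed


lemma quotient_topology_open:
  "openin (quotient_topology T f) U \<longleftrightarrow> U \<subseteq> f ` topspace T \<and> openin T {x \<in> topspace T. f x \<in> U}"
proof -
  have "istopology (\<lambda>U. U \<subseteq> f ` topspace T \<and> openin T {x \<in> topspace T. f x \<in> U})"
    unfolding istopology_def
  proof (rule conjI; intro allI impI)
    fix S1 S2
    assume a: "S1 \<subseteq> f ` topspace T \<and> openin T {x \<in> topspace T. f x \<in> S1}"
       "S2 \<subseteq> f ` topspace T \<and> openin T {x \<in> topspace T. f x \<in> S2}"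
    have "{x \<in> topspace T. f x \<in> S1 \<inter> S2} = {x \<in> topspace T. f x \<in> S1} \<inter> {x \<in> topspace T. f x \<in> S2}" by auto
    moreover have "openin T ({x \<in> topspace T. f x \<in> S1} \<inter> {x \<in> topspace T. f x \<in> S2})"
      using a by (intro openin_Int) auto
    moreover have "S1 \<inter> S2 \<subseteq> f ` topspace T" using a by blast
    ultimately show "S1 \<inter> S2 \<subseteq> f ` topspace T \<and> openin T {x \<in> topspace T. f x \<in> S1 \<inter> S2}"
      by simp
  next
    fix K
    assume a: "\<forall>S\<in>K. S \<subseteq> f ` topspace T \<and> openin T {x \<in> topspace T. f x \<in> S}"
    have "{x \<in> topspace T. f x \<in> \<Union>K} = (\<Union>S\<in>K. {x \<in> topspace T. f x \<in> S})" by auto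
    moreover have "openin T (\<Union>S\<in>K. {x \<in> topspace T. f x \<in> S})"
      using a by (intro openin_Union) auto
    moreover have "\<Union>K \<subseteq> f ` topspace T" using a by blast
    ultimately show "\<Union>K \<subseteq> f ` topspace T \<and> openin T {x \<in> topspace T. f x \<in> \<Union>K}"
      by simp
  qed
  then have "openin (topology (\<lambda>U. U \<subseteq> f ` topspace T \<and> openin T {x \<in> topspace T. f x \<in> U})) U
    = (U \<subseteq> f ` topspace T \<and> openin T {x \<in> topspace T. f x \<in> U})"
    by (subst topology_inverse') (assumption, rule refl)
  then show ?thesis unfolding quotient_topology_def .
qed


lemma quotient_topology_cont: "continuous_map T (quotient_topology T f) f"
proof -
  have ts: "topspace (quotient_topology T f) = f ` topspace T"
  proof
    show "topspace (quotient_topology T f) \<subseteq> f ` topspace T"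
    proof
      fix y assume "y \<in> topspace (quotient_topology T f)"
      then obtain U where "openin (quotient_topology T f) U" "y \<in> U"
        unfolding topspace_def by blast
      then show "y \<in> f ` topspace T" unfolding quotient_topology_open by blast
    qed
    have "openin (quotient_topology T f) (f ` topspace T)"
    proof -
      have "{x \<in> topspace T. f x \<in> f ` topspace T} = topspace T" by blast
      then show ?thesis unfolding quotient_topology_open by simp
    qed
    then show "f ` topspace T \<subseteq> topspace (quotient_topology T f)"
      by (rule openin_subset)
  qed
  show ?thesis unfolding continuous_map_def ts
  proof (intro conjI allI impI)
    show "f \<in> topspace T \<rightarrow> f ` topspace T" by blast
    fix U assume "openin (quotient_topology T f) U"
    then show "openin T {x \<in> topspace T. f x \<in> U}" unfolding quotient_topology_open by blast
  qed
qed

lemma covering_mapD: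
  assumes "covering_map Xt X P" "x \<in> topspace X"
  shows "\<exists>T. x \<in> T \<and> openin X T \<and>
        (\<exists>V. \<Union>V = {y \<in> topspace Xt. P y \<in> T} \<and> (\<forall>u\<in>V. openin Xt u) \<and>
             pairwise disjnt V \<and>
             (\<forall>u\<in>V. homeomorphic_map (subtopology Xt u) (subtopology X T) P))"
proof -
  have "\<forall>x\<in>topspace X. \<exists>T. x \<in> T \<and> openin X T \<and>
        (\<exists>V. \<Union>V = {y \<in> topspace Xt. P y \<in> T} \<and> (\<forall>u\<in>V. openin Xt u) \<and>
             pairwise disjnt V \<and>
             (\<forall>u\<in>V. homeomorphic_map (subtopology Xt u) (subtopology X T) P))"
    using assms(1) unfolding covering_map_def by (rule conjunct2[OF conjunct2])
  then show ?thesis using assms(2) by (rule bspec)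
qed




lemma covering_mapE:
  assumes "covering_map Xt X P" "x \<in> topspace X"
  obtains T V where "x \<in> T" "openin X T" "\<Union>V = {y \<in> topspace Xt. P y \<in> T}" "\<forall>u\<in>V. openin Xt u"
             "pairwise disjnt V"
             "\<forall>u\<in>V. homeomorphic_map (subtopology Xt u) (subtopology X T) P"
  using covering_mapD[OF assms] by (elim exE conjE) (rule that; assumption)


lemma lift_unique:
  assumes cov: "covering_map Xt X P" and C: "connected_space C"
    and f1: "continuous_map C Xt f1" and f2: "continuous_map C Xt f2"
    and eqP: "\<And>x. x \<in> topspace C \<Longrightarrow> P (f1 x) = P (f2 x)"
    and a: "a \<in> topspace C" "f1 a = f2 a"
  shows "\<forall>x\<in>topspace C. f1 x = f2 x"
proof -
  have key: "\<exists>Ob. openin C Ob \<and> x \<in> Ob \<and> (\<forall>w\<in>Ob. (f1 w = f2 w) = (f1 x = f2 x))"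
    if x: "x \<in> topspace C" for x
  proof -
    have f1x: "f1 x \<in> topspace Xt" using continuous_map_image_subset_topspace[OF f1] x by blast
    have f2x: "f2 x \<in> topspace Xt" using continuous_map_image_subset_topspace[OF f2] x by blast
    have cP: "continuous_map Xt X P" using cov unfolding covering_map_def by (rule conjunct1)
    have y: "P (f1 x) \<in> topspace X"
      using continuous_map_image_subset_topspace[OF cP] f1x by blast
    obtain T V where T: "P (f1 x) \<in> T" "openin X T" "\<Union>V = {y \<in> topspace Xt. P y \<in> T}"
      "\<forall>u\<in>V. openin Xt u" "pairwise disjnt V" "\<forall>u\<in>V. homeomorphic_map (subtopology Xt u) (subtopology X T) P"
      by (rule covering_mapE[OF cov y])
    have "f1 x \<in> \<Union>V" using T(1,3) f1x by simp
    then obtain u1 where u1: "u1 \<in> V" "f1 x \<in> u1" by blast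
    have "f2 x \<in> \<Union>V" using T(1,3) f2x eqP[OF x] by simp
    then obtain u2 where u2: "u2 \<in> V" "f2 x \<in> u2" by blast
    define Ob where "Ob = {w \<in> topspace C. f1 w \<in> u1} \<inter> {w \<in> topspace C. f2 w \<in> u2}"
    have o1: "openin C {w \<in> topspace C. f1 w \<in> u1}"
      using openin_continuous_map_preimage[OF f1, of u1] T(4) u1(1) by blast
    have o2: "openin C {w \<in> topspace C. f2 w \<in> u2}"
      using openin_continuous_map_preimage[OF f2, of u2] T(4) u2(1) by blast
    have oOb: "openin C Ob" unfolding Ob_def using o1 o2 by (rule openin_Int)
    have xOb: "x \<in> Ob" unfolding Ob_def using x u1(2) u2(2) by blast
    have eqOb: "(f1 w = f2 w) = (f1 x = f2 x)" if w: "w \<in> Ob" for w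
    proof (cases "u1 = u2")
      case True
      have "u1 \<subseteq> topspace Xt" using T(4) u1(1) openin_subset by blast
      then have "topspace (subtopology Xt u1) = u1" unfolding topspace_subtopology by blast
      then have inj: "inj_on P u1"
        using T(6) u1(1) homeomorphic_imp_injective_map by metis
      have w1: "f1 w \<in> u1" "f2 w \<in> u1" "w \<in> topspace C" using w True unfolding Ob_def by auto
      have "f1 w = f2 w" using inj_onD[OF inj eqP[OF w1(3)] w1(1,2)] .
      moreover have "f1 x = f2 x" using inj_onD[OF inj eqP[OF x]] u1 u2 True by blast
      ultimately show ?thesis by simp
    next
      case False
      have "disjnt u1 u2" using T(5) u1(1) u2(1) False by (rule pairwiseD)
      then have d: "u1 \<inter> u2 = {}" unfolding disjnt_def .
      have "f1 w \<in> u1" "f2 w \<in> u2" using w unfolding Ob_def by auto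
      then have "f1 w \<noteq> f2 w" using d by (auto simp: disjoint_iff)
      moreover have "f1 x \<noteq> f2 x" using d u1(2) u2(2) by (auto simp: disjoint_iff)
      ultimately show ?thesis by simp
    qed
    show ?thesis by (rule exI[of _ Ob], intro conjI ballI oOb xOb eqOb)
  qed
  define S where "S = {x \<in> topspace C. f1 x = f2 x}"
  have oS: "openin C S"
    unfolding openin_subopen[of C S]
  proof
    fix x assume xS: "x \<in> S"
    then have x: "x \<in> topspace C" "f1 x = f2 x" unfolding S_def by auto
    obtain Ob where Ob: "openin C Ob" "x \<in> Ob" "\<forall>w\<in>Ob. (f1 w = f2 w) = (f1 x = f2 x)"
      using key[OF x(1)] by (elim exE conjE) (rule that; assumption)
    have "Ob \<subseteq> topspace C" using Ob(1) by (rule openin_subset)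
    then have "Ob \<subseteq> S" using Ob(3) x(2) unfolding S_def by auto
    then show "\<exists>T. openin C T \<and> x \<in> T \<and> T \<subseteq> S" using Ob by blast
  qed
  have oS': "openin C (topspace C - S)"
    unfolding openin_subopen[of C "topspace C - S"]
  proof
    fix x assume xS: "x \<in> topspace C - S"
    then have x: "x \<in> topspace C" "f1 x \<noteq> f2 x" unfolding S_def by auto
    obtain Ob where Ob: "openin C Ob" "x \<in> Ob" "\<forall>w\<in>Ob. (f1 w = f2 w) = (f1 x = f2 x)"
      using key[OF x(1)] by (elim exE conjE) (rule that; assumption)
    have "Ob \<subseteq> topspace C" using Ob(1) by (rule openin_subset)
    then have "Ob \<subseteq> topspace C - S" using Ob(3) x(2) unfolding S_def by auto
    then show "\<exists>T. openin C T \<and> x \<in> T \<and> T \<subseteq> topspace C - S" using Ob by blast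
  qed
  have "S \<subseteq> topspace C" unfolding S_def by blast
  then have "topspace C - (topspace C - S) = S" by blast
  then have "closedin C S" using oS' \<open>S \<subseteq> topspace C\<close> unfolding closedin_def by simp
  then have "S = {} \<or> S = topspace C" using C oS unfolding connected_space_clopen_in by blast
  then show ?thesis using a S_def by auto
qed



lemma slice_cont:
  assumes h: "continuous_map (prod_topology Z (top_of_set {0..1::real})) X h" and z: "z \<in> topspace Z"
  shows "continuous_map (top_of_set {0..1}) X (\<lambda>t. h (z, t))"
proof -
  have "continuous_map (top_of_set {0..1::real}) (prod_topology Z (top_of_set {0..1::real})) (\<lambda>t. (z, t))"
    using z by (intro continuous_map_pairedI) (simp_all add: continuous_map_id[unfolded id_def])
  then show ?thesis using continuous_map_compose[OF _ h] by (simp add: o_def)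
qed

lemma lift_local:
  fixes Z :: "'z topology" and h :: "'z \<times> real \<Rightarrow> 'a" and K :: "'z \<Rightarrow> real \<Rightarrow> 'b"
  assumes cov: "covering_map Xt X P"
    and h: "continuous_map (prod_topology Z (top_of_set {0..1})) X h"
    and Kp: "\<And>z. z \<in> topspace Z \<Longrightarrow> pathin Xt (K z)"
    and Kh: "\<And>z t. z \<in> topspace Z \<Longrightarrow> t \<in> {0..1} \<Longrightarrow> P (K z t) = h (z, t)"
    and z0: "z0 \<in> topspace Z" and t0: "t0 \<in> {0..1}"
  shows "\<exists>e>0. \<forall>s. s \<in> {0..1} \<inter> ball t0 e \<and>
            (\<exists>N. openin Z N \<and> z0 \<in> N \<and> continuous_map (subtopology Z N) Xt (\<lambda>z. K z s)) \<longrightarrow>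
            (\<exists>N2. openin Z N2 \<and> z0 \<in> N2 \<and>
               continuous_map (subtopology (prod_topology Z (top_of_set {0..1})) (N2 \<times> ({0..1} \<inter> ball t0 e))) Xt
                 (\<lambda>(z,t). K z t))"
proof -
  let ?I = "top_of_set {0..1::real}"
  have "(z0, t0) \<in> topspace (prod_topology Z ?I)" using z0 t0 by simp
  then have ht: "h (z0, t0) \<in> topspace X"
    using continuous_map_image_subset_topspace[OF h] by blast
  obtain T V where T: "h (z0, t0) \<in> T" "openin X T" "\<Union>V = {y \<in> topspace Xt. P y \<in> T}"
      "\<forall>u\<in>V. openin Xt u" "pairwise disjnt V" "\<forall>u\<in>V. homeomorphic_map (subtopology Xt u) (subtopology X T) P"
    by (rule covering_mapE[OF cov ht])
  define W where "W = {p \<in> topspace (prod_topology Z ?I). h p \<in> T}"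
  have oW: "openin (prod_topology Z ?I) W" unfolding W_def
    using openin_continuous_map_preimage[OF h T(2)] .
  have "(z0, t0) \<in> W" unfolding W_def using z0 t0 T(1) by simp
  then have "\<exists>U V. openin Z U \<and> openin ?I V \<and> z0 \<in> U \<and> t0 \<in> V \<and> U \<times> V \<subseteq> W"
    using oW[unfolded openin_prod_topology_alt] by simp
  then obtain N0 J0 where NJ: "openin Z N0" "openin ?I J0" "z0 \<in> N0" "t0 \<in> J0" "N0 \<times> J0 \<subseteq> W"
    by (elim exE conjE) (rule that; assumption)
  have "\<forall>x\<in>J0. \<exists>e>0. \<forall>x'\<in>{0..1}. dist x' x < e \<longrightarrow> x' \<in> J0"
    using NJ(2) unfolding openin_euclidean_subtopology_iff by (rule conjunct2)
  then have "\<exists>e>0. \<forall>x'\<in>{0..1}. dist x' t0 < e \<longrightarrow> x' \<in> J0" using NJ(4) by (rule bspec)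
  then obtain e where e: "e > 0" "\<And>x'. x' \<in> {0..1} \<Longrightarrow> dist x' t0 < e \<Longrightarrow> x' \<in> J0"
    by auto
  define J where "J = {0..1} \<inter> ball t0 e"
  have JJ0: "J \<subseteq> J0" unfolding J_def using e(2) by (auto simp: dist_commute)
  have hT: "h (z, t) \<in> T" if "z \<in> N0" "t \<in> J" for z t
    using NJ(5) JJ0 that W_def by blast
  have J01: "J \<subseteq> {0..1}" unfolding J_def by blast
  have connJ: "connected J" unfolding J_def
    by (intro convex_connected convex_Int convex_ball) (simp add: convex_real_interval)
  have connC: "connected_space (subtopology ?I J)"
    by (rule connected_space_subtopology) (simp add: connectedin_subtopology connJ J01)
  have tsC: "topspace (subtopology ?I J) = J" using J01 by auto
  show ?thesis
  proof (rule exI[of _ e], intro conjI e(1) allI impI, elim conjE exE)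
    fix s N
    assume s: "s \<in> {0..1} \<inter> ball t0 e" and N: "openin Z N" "z0 \<in> N"
      and Nc: "continuous_map (subtopology Z N) Xt (\<lambda>z. K z s)"
    have sJ: "s \<in> J" using s J_def by simp
    have s01: "s \<in> {0..1}" using s by simp
    have Kz0s: "K z0 s \<in> topspace Xt"
      using continuous_map_image_subset_topspace[OF Kp[OF z0, unfolded pathin_def]] s01 by auto
    have "P (K z0 s) \<in> T" using Kh[OF z0 s01] hT[OF NJ(3) sJ] by simp
    then have "K z0 s \<in> \<Union>V" using T(3) Kz0s by simp
    then obtain u where u: "u \<in> V" "K z0 s \<in> u" by blast
    have ou: "openin Xt u" using T(4) u(1) by blast
    have hu: "homeomorphic_map (subtopology Xt u) (subtopology X T) P" using T(6) u(1) by blast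
    then obtain \<phi> where phi: "homeomorphic_maps (subtopology Xt u) (subtopology X T) P \<phi>"
      unfolding homeomorphic_map_maps by blast
    have phic: "continuous_map (subtopology X T) (subtopology Xt u) \<phi>"
      and phiinv: "\<And>x. x \<in> topspace (subtopology Xt u) \<Longrightarrow> \<phi> (P x) = x"
      and phiinv2: "\<And>y. y \<in> topspace (subtopology X T) \<Longrightarrow> P (\<phi> y) = y"
      using phi unfolding homeomorphic_maps_def by auto
    define N2 where "N2 = {z \<in> topspace (subtopology Z N). K z s \<in> u} \<inter> N0"
    have "openin (subtopology Z N) {z \<in> topspace (subtopology Z N). K z s \<in> u}"
      using openin_continuous_map_preimage[OF Nc ou] .
    then have "openin Z {z \<in> topspace (subtopology Z N). K z s \<in> u}"
      using N(1) openin_trans_full by blast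
    then have oN2: "openin Z N2" unfolding N2_def using NJ(1) by (rule openin_Int)
    have z0N2: "z0 \<in> N2" unfolding N2_def using z0 N(2) u(2) NJ(3) by simp
    have N2Z: "N2 \<subseteq> topspace Z" unfolding N2_def by auto
    have N2N0: "N2 \<subseteq> N0" unfolding N2_def by auto
    have eqK: "K z t = \<phi> (h (z, t))" if z: "z \<in> N2" and t: "t \<in> J" for z t
    proof -
      have zZ: "z \<in> topspace Z" using z N2Z by blast
      have f1: "continuous_map (subtopology ?I J) Xt (K z)"
        using Kp[OF zZ] unfolding pathin_def by (rule continuous_map_from_subtopology)
      have hz: "continuous_map (subtopology ?I J) X (\<lambda>t. h (z, t))"
        using slice_cont[OF h zZ] by (rule continuous_map_from_subtopology)
      have "continuous_map (subtopology ?I J) (subtopology X T) (\<lambda>t. h (z, t))"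
        using hz hT[OF] z N2N0 tsC by (intro continuous_map_into_subtopology) auto
      then have f2: "continuous_map (subtopology ?I J) Xt (\<lambda>t. \<phi> (h (z, t)))"
        using continuous_map_compose[OF _ phic] continuous_map_into_fulltopology
        by (metis (no_types, lifting) comp_apply continuous_map_eq)
      have eqP: "P (K z t') = P (\<phi> (h (z, t')))" if t': "t' \<in> topspace (subtopology ?I J)" for t'
      proof -
        have t'J: "t' \<in> J" using t' tsC by simp
        have "h (z, t') \<in> topspace X"
          using continuous_map_image_subset_topspace[OF hz] t' by blast
        then have "h (z, t') \<in> topspace (subtopology X T)" using hT z N2N0 t'J by auto
        then have "P (\<phi> (h (z, t'))) = h (z, t')" by (rule phiinv2)
        moreover have "P (K z t') = h (z, t')" using Kh zZ t'J J01 by blast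
        ultimately show ?thesis by simp
      qed
      have Kzs: "K z s \<in> topspace (subtopology Xt u)"
      proof -
        have "K z s \<in> topspace Xt"
          using continuous_map_image_subset_topspace[OF Kp[OF zZ, unfolded pathin_def]] s01 by auto
        moreover have "K z s \<in> u" using z unfolding N2_def by simp
        ultimately show ?thesis by simp
      qed
      have "K z s = \<phi> (h (z, s))" using phiinv[OF Kzs] Kh[OF zZ s01] by simp
      moreover have sC: "s \<in> topspace (subtopology ?I J)" using sJ tsC by simp
      ultimately have "\<forall>x\<in>topspace (subtopology ?I J). K z x = \<phi> (h (z, x))"
        using lift_unique[OF cov connC f1 f2 eqP sC] by simp
      then show ?thesis using t tsC by simp
    qed
    let ?S = "subtopology (prod_topology Z ?I) (N2 \<times> J)"
    have tsS: "topspace ?S \<subseteq> N2 \<times> J" by simp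
    have "continuous_map ?S X h" by (rule continuous_map_from_subtopology[OF h])
    moreover have "h \<in> topspace ?S \<rightarrow> T" using tsS hT N2N0 by auto
    ultimately have "continuous_map ?S (subtopology X T) h"
      by (rule continuous_map_into_subtopology)
    then have "continuous_map ?S Xt (\<phi> \<circ> h)"
      using continuous_map_compose[OF _ phic] continuous_map_into_fulltopology by blast
    then have "continuous_map ?S Xt (\<lambda>(z,t). K z t)"
      by (rule continuous_map_eq) (use tsS eqK in auto)
    then show "\<exists>N2. openin Z N2 \<and> z0 \<in> N2 \<and>
               continuous_map (subtopology (prod_topology Z ?I) (N2 \<times> ({0..1} \<inter> ball t0 e))) Xt
                 (\<lambda>(z,t). K z t)"
      using oN2 z0N2 unfolding J_def by blast
  qed
qed



lemma lift_cont:
  fixes Z :: "'z topology" and h :: "'z \<times> real \<Rightarrow> 'a" and K :: "'z \<Rightarrow> real \<Rightarrow> 'b"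
  assumes cov: "covering_map Xt X P"
    and h: "continuous_map (prod_topology Z (top_of_set {0..1})) X h"
    and Kp: "\<And>z. z \<in> topspace Z \<Longrightarrow> pathin Xt (K z)"
    and Kh: "\<And>z t. z \<in> topspace Z \<Longrightarrow> t \<in> {0..1} \<Longrightarrow> P (K z t) = h (z, t)"
    and K0: "continuous_map Z Xt (\<lambda>z. K z 0)"
  shows "continuous_map (prod_topology Z (top_of_set {0..1})) Xt (\<lambda>(z,t). K z t)"
proof (rule continuous_map_local)
  let ?I = "top_of_set {0..1::real}"
  show "(\<lambda>(z,t). K z t) \<in> topspace (prod_topology Z ?I) \<rightarrow> topspace Xt"
  proof
    fix p assume "p \<in> topspace (prod_topology Z ?I)"
    then obtain z t where p: "p = (z, t)" "z \<in> topspace Z" "t \<in> {0..1}" by auto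
    show "(\<lambda>(z,t). K z t) p \<in> topspace Xt"
      using continuous_map_image_subset_topspace[OF Kp[OF p(2), unfolded pathin_def]] p by auto
  qed
  fix p assume "p \<in> topspace (prod_topology Z ?I)"
  then obtain z0 t0 where p: "p = (z0, t0)" and z0: "z0 \<in> topspace Z" and t0: "t0 \<in> {0..1}" by auto
  define A where "A = {s \<in> {0..1}. \<exists>N. openin Z N \<and> z0 \<in> N \<and> continuous_map (subtopology Z N) Xt (\<lambda>z. K z s)}"
  have "\<forall>t\<in>{0..1}. \<exists>e>0. \<forall>s. s \<in> {0..1} \<inter> ball t e \<and>
            (\<exists>N. openin Z N \<and> z0 \<in> N \<and> continuous_map (subtopology Z N) Xt (\<lambda>z. K z s)) \<longrightarrow>
            (\<exists>N2. openin Z N2 \<and> z0 \<in> N2 \<and>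
               continuous_map (subtopology (prod_topology Z ?I) (N2 \<times> ({0..1} \<inter> ball t e))) Xt
                 (\<lambda>(z,t). K z t))"
    using lift_local[OF cov h Kp Kh z0] by blast
  then obtain E where E: "\<And>t. t \<in> {0..1} \<Longrightarrow> E t > 0"
    "\<And>t s. t \<in> {0..1} \<Longrightarrow> s \<in> {0..1} \<inter> ball t (E t) \<Longrightarrow>
            (\<exists>N. openin Z N \<and> z0 \<in> N \<and> continuous_map (subtopology Z N) Xt (\<lambda>z. K z s)) \<Longrightarrow>
            (\<exists>N2. openin Z N2 \<and> z0 \<in> N2 \<and>
               continuous_map (subtopology (prod_topology Z ?I) (N2 \<times> ({0..1} \<inter> ball t (E t)))) Xt
                 (\<lambda>(z,t). K z t))"
    by metis
  have step: "\<exists>N2. openin Z N2 \<and> z0 \<in> N2 \<and>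
               continuous_map (subtopology (prod_topology Z ?I) (N2 \<times> ({0..1} \<inter> ball t (E t)))) Xt
                 (\<lambda>(z,t). K z t)"
    if t: "t \<in> {0..1}" and s: "s \<in> {0..1} \<inter> ball t (E t)" and sA: "s \<in> A" for t s
    using E(2)[OF t s] sA unfolding A_def by blast
  have ballA: "{0..1} \<inter> ball t (E t) \<subseteq> A" if t: "t \<in> {0..1}" and s: "s \<in> {0..1} \<inter> ball t (E t)" and sA: "s \<in> A" for t s
  proof
    fix r assume r: "r \<in> {0..1} \<inter> ball t (E t)"
    obtain N2 where N2: "openin Z N2" "z0 \<in> N2"
      "continuous_map (subtopology (prod_topology Z ?I) (N2 \<times> ({0..1} \<inter> ball t (E t)))) Xt (\<lambda>(z,t). K z t)"
      using step[OF t s sA] by blast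
    have "continuous_map (subtopology Z N2) (subtopology (prod_topology Z ?I) (N2 \<times> ({0..1} \<inter> ball t (E t)))) (\<lambda>z. (z, r))"
    proof (rule continuous_map_into_subtopology)
      show "continuous_map (subtopology Z N2) (prod_topology Z ?I) (\<lambda>z. (z, r))"
        using r by (intro continuous_map_pairedI continuous_map_from_subtopology continuous_map_id[unfolded id_def]) auto
      show "(\<lambda>z. (z, r)) \<in> topspace (subtopology Z N2) \<rightarrow> N2 \<times> ({0..1} \<inter> ball t (E t))"
        using r by auto
    qed
    then have "continuous_map (subtopology Z N2) Xt ((\<lambda>(z,t). K z t) \<circ> (\<lambda>z. (z, r)))"
      using N2(3) by (rule continuous_map_compose)
    then have "continuous_map (subtopology Z N2) Xt (\<lambda>z. K z r)" by (simp add: o_def)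
    then show "r \<in> A" unfolding A_def using r N2(1,2) by blast
  qed
  have tin: "t \<in> {0..1} \<inter> ball t (E t)" if "t \<in> {0..1}" for t
    using E(1)[OF that] that by simp
  have openA: "openin ?I A"
    unfolding openin_euclidean_subtopology_iff
  proof (intro conjI ballI)
    show "A \<subseteq> {0..1}" unfolding A_def by blast
    fix t assume tA: "t \<in> A"
    then have t01: "t \<in> {0..1}" unfolding A_def by blast
    have "{0..1} \<inter> ball t (E t) \<subseteq> A" using ballA[OF t01 tin[OF t01] tA] .
    then show "\<exists>e>0. \<forall>x'\<in>{0..1}. dist x' t < e \<longrightarrow> x' \<in> A"
      using E(1)[OF t01] by (intro exI[of _ "E t"]) (auto simp: dist_commute)
  qed
  have openA': "openin ?I ({0..1} - A)"
    unfolding openin_euclidean_subtopology_iff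
  proof (intro conjI ballI)
    show "{0..1} - A \<subseteq> {0..1}" by blast
    fix t assume tA: "t \<in> {0..1} - A"
    then have t01: "t \<in> {0..1}" by blast
    have "{0..1} \<inter> ball t (E t) \<subseteq> {0..1} - A"
    proof
      fix s assume s: "s \<in> {0..1} \<inter> ball t (E t)"
      show "s \<in> {0..1} - A"
      proof (rule ccontr)
        assume "s \<notin> {0..1} - A"
        then have "s \<in> A" using s by blast
        then have "t \<in> A" using ballA[OF t01 s] tin[OF t01] by blast
        then show False using tA by blast
      qed
    qed
    then show "\<exists>e>0. \<forall>x'\<in>{0..1}. dist x' t < e \<longrightarrow> x' \<in> {0..1} - A"
      using E(1)[OF t01] by (intro exI[of _ "E t"]) (auto simp: dist_commute)
  qed
  have A01: "A \<subseteq> {0..1}" unfolding A_def by blast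
  have "{0..1::real} - ({0..1} - A) = A" using A01 by blast
  then have closedA: "closedin ?I A" using openA' A01 unfolding closedin_def by simp
  have "0 \<in> A" unfolding A_def
  proof (intro CollectI conjI exI[of _ "topspace Z"])
    show "continuous_map (subtopology Z (topspace Z)) Xt (\<lambda>z. K z 0)" using K0 by simp
  qed (use z0 in auto)
  moreover have cc: "connected {0..1::real}" by (rule connected_Icc)
  have "A = {} \<or> A = {0..1}" using cc[unfolded connected_clopen, rule_format, of A] openA closedA by simp
  ultimately have "A = {0..1}" by auto
  then have t0A: "t0 \<in> A" using t0 by blast
  obtain N2 where N2: "openin Z N2" "z0 \<in> N2"
      "continuous_map (subtopology (prod_topology Z ?I) (N2 \<times> ({0..1} \<inter> ball t0 (E t0)))) Xt (\<lambda>(z,t). K z t)"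
    using step[OF t0 tin[OF t0] t0A] by blast
  have "openin ?I ({0..1} \<inter> ball t0 (E t0))" by (rule openin_open_Int) simp
  then have "openin (prod_topology Z ?I) (N2 \<times> ({0..1} \<inter> ball t0 (E t0)))"
    using N2(1) by (simp add: openin_prod_Times_iff)
  moreover have "p \<in> N2 \<times> ({0..1} \<inter> ball t0 (E t0))" using p N2(2) tin[OF t0] by simp
  ultimately show "\<exists>N. openin (prod_topology Z ?I) N \<and> p \<in> N \<and>
           continuous_map (subtopology (prod_topology Z ?I) N) Xt (\<lambda>(z,t). K z t)"
    using N2(3) by blast
qed



lemma id_deck: "id \<in> deck Xt P"
  unfolding deck_def by simp

lemma qmap_dorbit:
  assumes a: "a \<in> topspace Xt" and b: "b \<in> topspace Xt"
  shows "qmap P (dorbit Xt P (a, b)) = (P a, P b)"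
proof -
  have "(a, b) = (id (fst (a, b)), id (snd (a, b)))" by simp
  then have "(a, b) \<in> dorbit Xt P (a, b)" unfolding dorbit_def using id_deck by blast
  then have "(SOME w. w \<in> dorbit Xt P (a, b)) \<in> dorbit Xt P (a, b)" by (rule someI)
  then obtain g where g: "g \<in> deck Xt P" "(SOME w. w \<in> dorbit Xt P (a, b)) = (g a, g b)"
    unfolding dorbit_def by auto
  have "P (g a) = P a" "P (g b) = P b" using g(1) a b unfolding deck_def by auto
  then show ?thesis unfolding qmap_def g(2) by simp
qed

lemma lift_exists:
  assumes a: "a \<in> topspace Xt" and b: "b \<in> topspace Xt"
    and ex: "\<exists>\<gamma>. pathin Xt \<gamma> \<and> (\<forall>t\<in>{0..1}. P (\<gamma> t) = H t) \<and> (\<gamma> 0, \<gamma> 1) \<in> dorbit Xt P (a, b)"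
  shows "\<exists>f. pathin Xt f \<and> (\<forall>t\<in>{0..1}. P (f t) = H t) \<and> f 0 = a \<and> f 1 = b"
proof -
  obtain \<gamma> where \<gamma>: "pathin Xt \<gamma>" "\<forall>t\<in>{0..1}. P (\<gamma> t) = H t" "(\<gamma> 0, \<gamma> 1) \<in> dorbit Xt P (a, b)"
    using ex by blast
  then obtain g where g: "g \<in> deck Xt P" "\<gamma> 0 = g a" "\<gamma> 1 = g b"
    unfolding dorbit_def by auto
  have gh: "homeomorphic_map Xt Xt g" and gP: "\<And>x. x \<in> topspace Xt \<Longrightarrow> P (g x) = P x"
    using g(1) unfolding deck_def by auto
  obtain g' where g': "homeomorphic_maps Xt Xt g g'" using gh unfolding homeomorphic_map_maps by blast
  have g'c: "continuous_map Xt Xt g'" and g'g: "\<And>x. x \<in> topspace Xt \<Longrightarrow> g' (g x) = x"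
    and gg': "\<And>y. y \<in> topspace Xt \<Longrightarrow> g (g' y) = y"
    using g' unfolding homeomorphic_maps_def by auto
  have pc: "pathin Xt (g' \<circ> \<gamma>)" using \<gamma>(1) g'c unfolding pathin_def by (rule continuous_map_compose)
  have "\<forall>t\<in>{0..1}. P ((g' \<circ> \<gamma>) t) = H t"
  proof
    fix t :: real assume t: "t \<in> {0..1}"
    have gt: "\<gamma> t \<in> topspace Xt"
      using continuous_map_image_subset_topspace[OF \<gamma>(1)[unfolded pathin_def]] t by auto
    have "g' (\<gamma> t) \<in> topspace Xt"
      using continuous_map_image_subset_topspace[OF g'c] gt by auto
    then have "P (g' (\<gamma> t)) = P (g (g' (\<gamma> t)))" using gP by simp
    also have "\<dots> = P (\<gamma> t)" using gg'[OF gt] by simp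
    finally show "P ((g' \<circ> \<gamma>) t) = H t" using \<gamma>(2) t by simp
  qed
  moreover have "(g' \<circ> \<gamma>) 0 = a" using g(2) g'g[OF a] by simp
  moreover have "(g' \<circ> \<gamma>) 1 = b" using g(3) g'g[OF b] by simp
  ultimately show ?thesis using pc by blast
qed




lemma section_step:
  fixes Xt :: "'b topology" and X :: "'a topology" and P :: "'b \<Rightarrow> 'a"
  assumes cov: "covering_map Xt X P"
    and Uo: "openin (prod_topology X X) Ui"
    and Hc: "continuous_map
                   (prod_topology
                      (subtopology (orbit_space Xt P)
                         {z \<in> dorbit Xt P ` (topspace Xt \<times> topspace Xt). qmap P z \<in> Ui})
                      (top_of_set {0..1::real})) X H"
    and Hl: "\<forall>z \<in> dorbit Xt P ` (topspace Xt \<times> topspace Xt). qmap P z \<in> Ui \<longrightarrow>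
                    (\<exists>\<gamma>. pathin Xt \<gamma> \<and> (\<forall>t\<in>{0..1}. P (\<gamma> t) = H (z, t)) \<and>
                         (\<gamma> 0, \<gamma> 1) \<in> z)"
  defines "U' \<equiv> {w \<in> topspace (prod_topology Xt Xt). (P (fst w), P (snd w)) \<in> Ui}"
  shows "openin (prod_topology Xt Xt) U' \<and>
     (\<exists>H'. continuous_map
                   (prod_topology (subtopology (prod_topology Xt Xt) U') (top_of_set {0..1::real})) Xt H' \<and>
                 (\<forall>a b. (a, b) \<in> U' \<longrightarrow> H' ((a, b), 0) = a \<and> H' ((a, b), 1) = b))"
proof
  let ?I = "top_of_set {0..1::real}"
  let ?Q = "{z \<in> dorbit Xt P ` (topspace Xt \<times> topspace Xt). qmap P z \<in> Ui}"
  let ?Z = "subtopology (prod_topology Xt Xt) U'"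
  have cP: "continuous_map Xt X P" using cov unfolding covering_map_def by (rule conjunct1)
  have cPP: "continuous_map (prod_topology Xt Xt) (prod_topology X X) (\<lambda>w. (P (fst w), P (snd w)))"
    by (intro continuous_map_pairedI continuous_map_compose[OF continuous_map_fst cP, unfolded o_def]
        continuous_map_compose[OF continuous_map_snd cP, unfolded o_def])
  show "openin (prod_topology Xt Xt) U'" unfolding U'_def
    by (rule openin_continuous_map_preimage[OF cPP Uo])
  have tsZ: "topspace ?Z = U'" unfolding U'_def by auto
  have dQ: "continuous_map ?Z (subtopology (orbit_space Xt P) ?Q) (dorbit Xt P)"
  proof (rule continuous_map_into_subtopology)
    show "continuous_map ?Z (orbit_space Xt P) (dorbit Xt P)"
      unfolding orbit_space_def by (rule continuous_map_from_subtopology[OF quotient_topology_cont])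
    show "dorbit Xt P \<in> topspace ?Z \<rightarrow> ?Q"
    proof
      fix w assume "w \<in> topspace ?Z"
      then obtain a b where w: "w = (a, b)" "a \<in> topspace Xt" "b \<in> topspace Xt" "(P a, P b) \<in> Ui"
        unfolding tsZ U'_def by auto
      show "dorbit Xt P w \<in> ?Q" using w qmap_dorbit[OF w(2,3), of P] by auto
    qed
  qed
  define h where "h = (\<lambda>(w, t). H (dorbit Xt P w, t))"
  have "continuous_map (prod_topology ?Z ?I) (prod_topology (subtopology (orbit_space Xt P) ?Q) ?I)
          (\<lambda>(w, t). (dorbit Xt P w, id t))"
    using dQ by (simp add: continuous_map_prod_top)
  then have hc: "continuous_map (prod_topology ?Z ?I) X h"
    unfolding h_def using continuous_map_compose[OF _ Hc] by (simp add: o_def case_prod_unfold)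
  have exf: "\<exists>f. pathin Xt f \<and> (\<forall>t\<in>{0..1}. P (f t) = h (w, t)) \<and> f 0 = fst w \<and> f 1 = snd w"
    if w: "w \<in> topspace ?Z" for w
  proof -
    obtain a b where w: "w = (a, b)" "a \<in> topspace Xt" "b \<in> topspace Xt" "(P a, P b) \<in> Ui"
      using w unfolding tsZ U'_def by auto
    have "dorbit Xt P (a, b) \<in> dorbit Xt P ` (topspace Xt \<times> topspace Xt)" using w by auto
    moreover have "qmap P (dorbit Xt P (a, b)) \<in> Ui" using qmap_dorbit[OF w(2,3), of P] w(4) by simp
    ultimately have "\<exists>\<gamma>. pathin Xt \<gamma> \<and> (\<forall>t\<in>{0..1}. P (\<gamma> t) = H (dorbit Xt P (a, b), t)) \<and>
                         (\<gamma> 0, \<gamma> 1) \<in> dorbit Xt P (a, b)"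
      using Hl by blast
    from lift_exists[OF w(2,3) this] show ?thesis unfolding h_def w(1) by simp
  qed
  define K where "K = (\<lambda>w. SOME f. pathin Xt f \<and> (\<forall>t\<in>{0..1}. P (f t) = h (w, t)) \<and> f 0 = fst w \<and> f 1 = snd w)"
  have K: "pathin Xt (K w) \<and> (\<forall>t\<in>{0..1}. P (K w t) = h (w, t)) \<and> K w 0 = fst w \<and> K w 1 = snd w"
    if "w \<in> topspace ?Z" for w
    unfolding K_def using someI_ex[OF exf[OF that]] .
  have K0: "continuous_map ?Z Xt (\<lambda>w. K w 0)"
  proof (rule continuous_map_eq)
    show "continuous_map ?Z Xt fst" by (rule continuous_map_from_subtopology[OF continuous_map_fst])
    show "fst w = K w 0" if "w \<in> topspace ?Z" for w using K[OF that] by simp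
  qed
  have "continuous_map (prod_topology ?Z ?I) Xt (\<lambda>(w, t). K w t)"
    by (rule lift_cont[OF cov hc]) (use K K0 in auto)
  moreover have "\<forall>a b. (a, b) \<in> U' \<longrightarrow> (\<lambda>(w, t). K w t) ((a, b), 0) = a \<and> (\<lambda>(w, t). K w t) ((a, b), 1) = b"
  proof (intro allI impI)
    fix a b assume "(a, b) \<in> U'"
    then have "(a, b) \<in> topspace ?Z" using tsZ by simp
    from K[OF this] show "(\<lambda>(w, t). K w t) ((a, b), 0) = a \<and> (\<lambda>(w, t). K w t) ((a, b), 1) = b" by simp
  qed
  ultimately show "\<exists>H'. continuous_map (prod_topology ?Z ?I) Xt H' \<and>
                 (\<forall>a b. (a, b) \<in> U' \<longrightarrow> H' ((a, b), 0) = a \<and> H' ((a, b), 1) = b)"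
    by blast
qed


theorem mainTheorem13:
  fixes X :: "'a topology" and Xt :: "'b topology" and P :: "'b \<Rightarrow> 'a"
  assumes "locally_finite_cw_complex X"
    and "connected_space X"
    and "universal_cover Xt X P"
  shows "TCtilde Xt X P \<ge> TC Xt"
proof -
  have cov: "covering_map Xt X P" using assms(3) unfolding universal_cover_def by (rule conjunct1)
  have cP: "continuous_map Xt X P" using cov unfolding covering_map_def by (rule conjunct1)
  let ?A = "{enat k | k. \<exists>U :: nat \<Rightarrow> ('a \<times> 'a) set.
     (\<forall>i\<le>k. openin (prod_topology X X) (U i)) \<and>
     (\<Union>i\<le>k. U i) = topspace (prod_topology X X) \<and>
     (\<forall>i\<le>k. \<exists>H. continuous_map
                   (prod_topology
                      (subtopology (orbit_space Xt P)
                         {z \<in> dorbit Xt P ` (topspace Xt \<times> topspace Xt). qmap P z \<in> U i})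
                      (top_of_set {0..1::real})) X H \<and>
                 (\<forall>z \<in> dorbit Xt P ` (topspace Xt \<times> topspace Xt). qmap P z \<in> U i \<longrightarrow>
                    (\<exists>\<gamma>. pathin Xt \<gamma> \<and> (\<forall>t\<in>{0..1}. P (\<gamma> t) = H (z, t)) \<and>
                         (\<gamma> 0, \<gamma> 1) \<in> z)))}"
  let ?B = "{enat n | n. \<exists>U :: nat \<Rightarrow> ('b \<times> 'b) set.
     (\<forall>i\<le>n. openin (prod_topology Xt Xt) (U i)) \<and>
     (\<Union>i\<le>n. U i) = topspace (prod_topology Xt Xt) \<and>
     (\<forall>i\<le>n. \<exists>H. continuous_map
                   (prod_topology (subtopology (prod_topology Xt Xt) (U i)) (top_of_set {0..1::real})) Xt H \<and>
                 (\<forall>a b. (a, b) \<in> U i \<longrightarrow> H ((a, b), 0) = a \<and> H ((a, b), 1) = b))}"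
  have "?A \<subseteq> ?B"
  proof
    fix x assume "x \<in> ?A"
    then obtain k U where x: "x = enat k"
      and Uo: "\<forall>i\<le>k. openin (prod_topology X X) (U i)"
      and Uc: "(\<Union>i\<le>k. U i) = topspace (prod_topology X X)"
      and Us: "\<forall>i\<le>k. \<exists>H. continuous_map
                   (prod_topology
                      (subtopology (orbit_space Xt P)
                         {z \<in> dorbit Xt P ` (topspace Xt \<times> topspace Xt). qmap P z \<in> U i})
                      (top_of_set {0..1::real})) X H \<and>
                 (\<forall>z \<in> dorbit Xt P ` (topspace Xt \<times> topspace Xt). qmap P z \<in> U i \<longrightarrow>
                    (\<exists>\<gamma>. pathin Xt \<gamma> \<and> (\<forall>t\<in>{0..1}. P (\<gamma> t) = H (z, t)) \<and>
                         (\<gamma> 0, \<gamma> 1) \<in> z))"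
      unfolding mem_Collect_eq by (elim exE conjE) (rule that; assumption)
    define U' where "U' = (\<lambda>i. {w \<in> topspace (prod_topology Xt Xt). (P (fst w), P (snd w)) \<in> U i})"
    have st: "openin (prod_topology Xt Xt) (U' i) \<and>
     (\<exists>H'. continuous_map
                   (prod_topology (subtopology (prod_topology Xt Xt) (U' i)) (top_of_set {0..1::real})) Xt H' \<and>
                 (\<forall>a b. (a, b) \<in> U' i \<longrightarrow> H' ((a, b), 0) = a \<and> H' ((a, b), 1) = b))"
      if i: "i \<le> k" for i
    proof -
      obtain H where H: "continuous_map
                   (prod_topology
                      (subtopology (orbit_space Xt P)
                         {z \<in> dorbit Xt P ` (topspace Xt \<times> topspace Xt). qmap P z \<in> U i})
                      (top_of_set {0..1::real})) X H"
          "\<forall>z \<in> dorbit Xt P ` (topspace Xt \<times> topspace Xt). qmap P z \<in> U i \<longrightarrow>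
                    (\<exists>\<gamma>. pathin Xt \<gamma> \<and> (\<forall>t\<in>{0..1}. P (\<gamma> t) = H (z, t)) \<and>
                         (\<gamma> 0, \<gamma> 1) \<in> z)"
        using Us[rule_format, OF i] by (elim exE conjE) (rule that; assumption)
      have "openin (prod_topology X X) (U i)" using Uo[rule_format, OF i] .
      from section_step[OF cov this H] show ?thesis unfolding U'_def .
    qed
    have cov': "(\<Union>i\<le>k. U' i) = topspace (prod_topology Xt Xt)"
    proof
      show "(\<Union>i\<le>k. U' i) \<subseteq> topspace (prod_topology Xt Xt)" unfolding U'_def by blast
      show "topspace (prod_topology Xt Xt) \<subseteq> (\<Union>i\<le>k. U' i)"
      proof
        fix w assume w: "w \<in> topspace (prod_topology Xt Xt)"
        then have "P (fst w) \<in> topspace X" "P (snd w) \<in> topspace X"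
          using continuous_map_image_subset_topspace[OF cP] by (auto simp: mem_Times_iff)
        then have "(P (fst w), P (snd w)) \<in> (\<Union>i\<le>k. U i)" using Uc by simp
        then obtain i where "i \<le> k" "(P (fst w), P (snd w)) \<in> U i" by blast
        then show "w \<in> (\<Union>i\<le>k. U' i)" unfolding U'_def using w by blast
      qed
    qed
    have "\<exists>U :: nat \<Rightarrow> ('b \<times> 'b) set.
     (\<forall>i\<le>k. openin (prod_topology Xt Xt) (U i)) \<and>
     (\<Union>i\<le>k. U i) = topspace (prod_topology Xt Xt) \<and>
     (\<forall>i\<le>k. \<exists>H. continuous_map
                   (prod_topology (subtopology (prod_topology Xt Xt) (U i)) (top_of_set {0..1::real})) Xt H \<and>
                 (\<forall>a b. (a, b) \<in> U i \<longrightarrow> H ((a, b), 0) = a \<and> H ((a, b), 1) = b))"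
    proof (rule exI[of _ U'], intro conjI)
      show "\<forall>i\<le>k. openin (prod_topology Xt Xt) (U' i)" using st by blast
      show "(\<Union>i\<le>k. U' i) = topspace (prod_topology Xt Xt)" by (rule cov')
      show "\<forall>i\<le>k. \<exists>H. continuous_map
                   (prod_topology (subtopology (prod_topology Xt Xt) (U' i)) (top_of_set {0..1::real})) Xt H \<and>
                 (\<forall>a b. (a, b) \<in> U' i \<longrightarrow> H ((a, b), 0) = a \<and> H ((a, b), 1) = b)"
        using st by blast
    qed
    then show "x \<in> ?B" unfolding x mem_Collect_eq by (intro exI[of _ k] conjI refl)
  qed
  then have "Inf ?B \<le> Inf ?A" by (rule Inf_superset_mono)
  then show ?thesis unfolding TCtilde_def TC_def by simp
qed


end
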